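(* Let $\mathbf{X}=(X_1,X_2)$ and $\mathbf{Y}=(Y_1,Y_2)$ be jointly distributed random variables (the "past" and "future" states of a bivariate Markovian process). Let $\mathcal{A}$ and the product lattice $(\mathcal{A}\times\mathcal{A},\preceq)$ be as described in the context, and fix a single-target redundancy function $\texttt{Red}$. Suppose $I_\cap$ and $I'_\cap$ are two double-redundancy functions on $\mathcal{A}\times\mathcal{A}$ that both satisfy Axiom 1 (compatibility, with respect to this same $\texttt{Red}$) and Axiom 2 (partial ordering), and let $I_\partial$, $I'_\partial$ be their respective atoms defined via Möbius inversion. If $I_\partial^{\{\{1\},\{2\}\}\to\{\{1\},\{2\}\}} = I'^{\{\{1\},\{2\}\}\to\{\{1\},\{2\}\}}_\partial$, then $I_\partial^{\boldsymbol\alpha\to\boldsymbol\beta}=I'^{\boldsymbol\alpha\to\boldsymbol\beta}_\partial$ for all 16 nodes $\boldsymbol\alpha\to\boldsymbol\beta\in\mathcal{A}\times\mathcal{A}$. That is, Axioms 1 and 2 provide unique values for the 16 atoms once one specifies (i) a single-target redundancy function $\texttt{Red}$ and (ii) the value of the atom $I_\partial^{\{\{1\},\{2\}\}\to\{\{1\},\{2\}\}}$.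
   Context: $\mathcal{A}$ is the set of antichains of nonempty subsets of $\{1,2\}$: $\mathcal{A}=\{\{\{1\}\},\{\{2\}\},\{\{1,2\}\},\{\{1\},\{2\}\}\}$. For $\boldsymbol\alpha,\boldsymbol\beta\in\mathcal{A}$, $\boldsymbol\alpha\preceq\boldsymbol\beta$ iff for every $b\in\boldsymbol\beta$ there is $a\in\boldsymbol\alpha$ with $a\subseteq b$. Elements of $\mathcal{A}\times\mathcal{A}$ are written $\boldsymbol\alpha\to\boldsymbol\beta$, ordered by $\boldsymbol\alpha\to\boldsymbol\beta\preceq\boldsymbol\alpha'\to\boldsymbol\beta'$ iff $\boldsymbol\alpha\preceq\boldsymbol\alpha'$ and $\boldsymbol\beta\preceq\boldsymbol\beta'$ (16 nodes). For a subset $a=\{i_1,\dots,i_k\}\subseteq\{1,2\}$ write $\mathbf{X}^a=(X_{i_1},\dots,X_{i_k})$, similarly $\mathbf{Y}^a$. A single-target redundancy function $\texttt{Red}(Z_1,\dots,Z_J;T)$ assigns a real number to any finite collection of source random vectors $Z_1,\dots,Z_J$ and a target random vector $T$ (the partial-information-decomposition redundancy). A double-redundancy function assigns a real number $I_\cap^{\boldsymbol\alpha\to\boldsymbol\beta}$ to each node. Axiom 1 (compatibility): for $\boldsymbol\alpha=\{\alpha_1,\dots,\alpha_J\}$, $\boldsymbol\beta=\{\beta_1,\dots,\beta_K\}$: if $J=K=1$ then $I_\cap^{\boldsymbol\alpha\to\boldsymbol\beta}=I(\mathbf{X}^{\alpha_1};\mathbf{Y}^{\beta_1})$ (Shannon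 mutual information); if $K=1$ then $I_\cap^{\boldsymbol\alpha\to\boldsymbol\beta}=\texttt{Red}(\mathbf{X}^{\alpha_1},\dots,\mathbf{X}^{\alpha_J};\mathbf{Y}^{\beta_1})$; if $J=1$ then $I_\cap^{\boldsymbol\alpha\to\boldsymbol\beta}=\texttt{Red}(\mathbf{Y}^{\beta_1},\dots,\mathbf{Y}^{\beta_K};\mathbf{X}^{\alpha_1})$. Axiom 2 (partial ordering): if $\boldsymbol\alpha\to\boldsymbol\beta\preceq\boldsymbol\alpha'\to\boldsymbol\beta'$ then $I_\cap^{\boldsymbol\alpha\to\boldsymbol\beta}\le I_\cap^{\boldsymbol\alpha'\to\boldsymbol\beta'}$. The atoms $I_\partial^{\boldsymbol\alpha\to\boldsymbol\beta}$ are the unique numbers satisfying $I_\cap^{\boldsymbol\alpha\to\boldsymbol\beta}=\sum_{\boldsymbol\alpha'\to\boldsymbol\beta'\preceq\boldsymbol\alpha\to\boldsymbol\beta}I_\partial^{\boldsymbol\alpha'\to\boldsymbol\beta'}$ for all nodes, equivalently $I_\partial^{\boldsymbol\alpha\to\boldsymbol\beta}=I_\cap^{\boldsymbol\alpha\to\boldsymbol\beta}-\sum_{\boldsymbol\alpha'\to\boldsymbol\beta'\prec\boldsymbol\alpha\to\boldsymbol\beta}I_\partial^{\boldsymbol\alpha'\to\boldsymbol\beta'}$. *)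

theory Defs
  imports "HOL-Probability.Probability" "HOL-Library.Multiset"
begin

definition AC :: "nat set set set" where
  "AC = {{{1}}, {{2}}, {{1,2}}, {{1},{2}}}"

definition ac_le :: "nat set set \<Rightarrow> nat set set \<Rightarrow> bool" where
  "ac_le \<alpha> \<beta> \<longleftrightarrow> (\<forall>b\<in>\<beta>. \<exists>a\<in>\<alpha>. a \<subseteq> b)"

text \<open>Product order on nodes alpha -> beta, represented as pairs.\<close>
definition node_le :: "nat set set \<times> nat set set \<Rightarrow> nat set set \<times> nat set set \<Rightarrow> bool" where
  "node_le n m \<longleftrightarrow> ac_le (fst n) (fst m) \<and> ac_le (snd n) (snd m)"

definition subvec :: "(nat \<Rightarrow> 'a \<Rightarrow> 'b) \<Rightarrow> nat set \<Rightarrow> 'a \<Rightarrow> (nat \<Rightarrow> 'b)" where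
  "subvec Z a = (\<lambda>\<omega>. restrict (\<lambda>i. Z i \<omega>) a)"

definition MI :: "'a measure \<Rightarrow> ('a \<Rightarrow> 'c) \<Rightarrow> ('a \<Rightarrow> 'd) \<Rightarrow> real" where
  "MI M U V = prob_space.mutual_information M 2 (count_space UNIV) (count_space UNIV) U V"

definition compatible ::
  "'a measure \<Rightarrow> (nat \<Rightarrow> 'a \<Rightarrow> 'b) \<Rightarrow> (nat \<Rightarrow> 'a \<Rightarrow> 'b)
   \<Rightarrow> (('a \<Rightarrow> nat \<Rightarrow> 'b) multiset \<Rightarrow> ('a \<Rightarrow> nat \<Rightarrow> 'b) \<Rightarrow> real)
   \<Rightarrow> (nat set set \<Rightarrow> nat set set \<Rightarrow> real) \<Rightarrow> bool" where
  "compatible M X Y Red Icap \<longleftrightarrow>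
    (\<forall>\<alpha>\<in>AC. \<forall>\<beta>\<in>AC.
      (card \<alpha> = 1 \<and> card \<beta> = 1 \<longrightarrow>
         Icap \<alpha> \<beta> = MI M (subvec X (the_elem \<alpha>)) (subvec Y (the_elem \<beta>))) \<and>
      (card \<beta> = 1 \<longrightarrow>
         Icap \<alpha> \<beta> = Red (image_mset (subvec X) (mset_set \<alpha>)) (subvec Y (the_elem \<beta>))) \<and>
      (card \<alpha> = 1 \<longrightarrow>
         Icap \<alpha> \<beta> = Red (image_mset (subvec Y) (mset_set \<beta>)) (subvec X (the_elem \<alpha>))))"

definition monotone_dr :: "(nat set set \<Rightarrow> nat set set \<Rightarrow> real) \<Rightarrow> bool" where
  "monotone_dr Icap \<longleftrightarrow>
    (\<forall>\<alpha>\<in>AC. \<forall>\<beta>\<in>AC. \<forall>\<alpha>'\<in>AC. \<forall>\<beta>'\<in>AC.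
       node_le (\<alpha>, \<beta>) (\<alpha>', \<beta>') \<longrightarrow> Icap \<alpha> \<beta> \<le> Icap \<alpha>' \<beta>')"

definition atoms_of :: "(nat set set \<Rightarrow> nat set set \<Rightarrow> real) \<Rightarrow> (nat set set \<Rightarrow> nat set set \<Rightarrow> real) \<Rightarrow> bool" where
  "atoms_of Icap Ipart \<longleftrightarrow>
    (\<forall>\<alpha>\<in>AC. \<forall>\<beta>\<in>AC.
       Icap \<alpha> \<beta> = (\<Sum>n\<in>{n \<in> AC \<times> AC. node_le n (\<alpha>, \<beta>)}. Ipart (fst n) (snd n)))"

end

theory Submission
  imports Defs
begin

lemma ac_le_refl: "ac_le a a"
  unfolding ac_le_def by blast

lemma ac_le_trans: "ac_le a b \<Longrightarrow> ac_le b c \<Longrightarrow> ac_le a c"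
  unfolding ac_le_def by (meson order_trans)

lemma ac_le_antisym: "a \<in> AC \<Longrightarrow> b \<in> AC \<Longrightarrow> ac_le a b \<Longrightarrow> ac_le b a \<Longrightarrow> a = b"
  unfolding AC_def ac_le_def by auto

lemma AC_card: "a \<in> AC \<Longrightarrow> a \<noteq> {{1},{2}} \<Longrightarrow> card a = 1"
  unfolding AC_def by auto

lemma finite_AC: "finite AC"
  unfolding AC_def by simp

definition D :: "nat set set \<times> nat set set \<Rightarrow> (nat set set \<times> nat set set) set" where
  "D x = {n \<in> AC \<times> AC. node_le n x}"

lemma atoms_eq:
  assumes "atoms_of Icap Ipart" "atoms_of Icap' Ipart'"
    and "\<And>x. x \<in> AC \<times> AC \<Longrightarrow> x \<noteq> ({{1},{2}},{{1},{2}}) \<Longrightarrow> Icap (fst x) (snd x) = Icap' (fst x) (snd x)"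
    and "Ipart {{1},{2}} {{1},{2}} = Ipart' {{1},{2}} {{1},{2}}"
  shows "x \<in> AC \<times> AC \<Longrightarrow> Ipart (fst x) (snd x) = Ipart' (fst x) (snd x)"
proof (induction "card (D x)" arbitrary: x rule: less_induct)
  case less
  show ?case
  proof (cases "x = ({{1},{2}},{{1},{2}})")
    case True then show ?thesis using assms(4) by simp
  next
    case False
    have fin: "finite (D x)" unfolding D_def using finite_AC by auto
    have xin: "x \<in> D x" using less.prems unfolding D_def node_le_def by (auto simp: ac_le_refl)
    have IH: "Ipart (fst y) (snd y) = Ipart' (fst y) (snd y)" if y: "y \<in> D x - {x}" for y
    proof -
      have sub: "D y \<subseteq> D x" using y unfolding D_def node_le_def by (auto intro: ac_le_trans)
      have "x \<notin> D y"
      proof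
        assume "x \<in> D y"
        then have "node_le x y" unfolding D_def by auto
        moreover have "node_le y x" "y \<in> AC \<times> AC" using y unfolding D_def by auto
        ultimately have "x = y" using less.prems unfolding node_le_def
          by (metis ac_le_antisym mem_Times_iff prod.collapse)
        then show False using y by auto
      qed
      then have "D y \<subset> D x" using sub xin by auto
      then have "card (D y) < card (D x)" using fin by (simp add: psubset_card_mono)
      moreover have "y \<in> AC \<times> AC" using y unfolding D_def by auto
      ultimately show ?thesis using less.hyps by blast
    qed
    have e1: "Icap (fst x) (snd x) = (\<Sum>n\<in>D x. Ipart (fst n) (snd n))"
      using assms(1) less.prems unfolding atoms_of_def D_def by (auto simp: mem_Times_iff)
    have e2: "Icap' (fst x) (snd x) = (\<Sum>n\<in>D x. Ipart' (fst n) (snd n))"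
      using assms(2) less.prems unfolding atoms_of_def D_def by (auto simp: mem_Times_iff)
    have s1: "(\<Sum>n\<in>D x. Ipart (fst n) (snd n)) = Ipart (fst x) (snd x) + (\<Sum>n\<in>D x - {x}. Ipart (fst n) (snd n))"
      using fin xin by (simp add: sum.remove)
    have s2: "(\<Sum>n\<in>D x. Ipart' (fst n) (snd n)) = Ipart' (fst x) (snd x) + (\<Sum>n\<in>D x - {x}. Ipart' (fst n) (snd n))"
      using fin xin by (simp add: sum.remove)
    have s3: "(\<Sum>n\<in>D x - {x}. Ipart (fst n) (snd n)) = (\<Sum>n\<in>D x - {x}. Ipart' (fst n) (snd n))"
      using IH by (rule sum.cong[OF refl])
    show ?thesis using e1 e2 s1 s2 s3 assms(3)[OF less.prems False] by linarith
  qed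
qed

theorem proposition1:
  fixes M :: "'a measure"
    and X Y :: "nat \<Rightarrow> 'a \<Rightarrow> 'b"
    and Red :: "('a \<Rightarrow> nat \<Rightarrow> 'b) multiset \<Rightarrow> ('a \<Rightarrow> nat \<Rightarrow> 'b) \<Rightarrow> real"
    and Icap Icap' Ipart Ipart' :: "nat set set \<Rightarrow> nat set set \<Rightarrow> real"
  assumes "prob_space M"
    and "\<And>i. i \<in> {1,2} \<Longrightarrow> X i \<in> measurable M (count_space UNIV)"
    and "\<And>i. i \<in> {1,2} \<Longrightarrow> Y i \<in> measurable M (count_space UNIV)"
    and "compatible M X Y Red Icap" and "monotone_dr Icap"
    and "compatible M X Y Red Icap'" and "monotone_dr Icap'"
    and "atoms_of Icap Ipart" and "atoms_of Icap' Ipart'"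
    and "Ipart {{1},{2}} {{1},{2}} = Ipart' {{1},{2}} {{1},{2}}"
  shows "\<forall>\<alpha>\<in>AC. \<forall>\<beta>\<in>AC. Ipart \<alpha> \<beta> = Ipart' \<alpha> \<beta>"
proof (intro ballI)
  fix \<alpha> \<beta> assume ab: "\<alpha> \<in> AC" "\<beta> \<in> AC"
  have cap: "Icap (fst x) (snd x) = Icap' (fst x) (snd x)"
    if xA: "x \<in> AC \<times> AC" and xB: "x \<noteq> ({{1},{2}},{{1},{2}})" for x
  proof -
    obtain a b where x: "x = (a, b)" "a \<in> AC" "b \<in> AC" using xA by (cases x) auto
    have "card a = 1 \<or> card b = 1" using x xB AC_card by auto
    then show ?thesis
    proof
      assume "card a = 1"
      then show ?thesis using assms(4,6) x unfolding compatible_def by auto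
    next
      assume "card b = 1"
      then show ?thesis using assms(4,6) x unfolding compatible_def by auto
    qed
  qed
  have "Ipart (fst (\<alpha>,\<beta>)) (snd (\<alpha>,\<beta>)) = Ipart' (fst (\<alpha>,\<beta>)) (snd (\<alpha>,\<beta>))"
    by (rule atoms_eq[OF assms(8,9) cap assms(10)]) (use ab in auto)
  then show "Ipart \<alpha> \<beta> = Ipart' \<alpha> \<beta>" by simp
qed

end
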